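(* Let $\{\nu_k\}_{k\ge0}$ be a sparse sequence of stopping times and define $S_m:=\bigcup_{k\ge0}\{\nu_k=m\}$ for $m\ge0$. Then $\{S_m\}_{m\ge0}$ is sparse.
   Context: $(\Omega,\mathcal{F},\mu)$ is a probability space with filtration $\{\mathcal{F}_k\}_{k\ge0}$, $\mathsf{E}_k=\mathsf{E}[\cdot|\mathcal{F}_k]$. An increasing sequence of stopping times $\{\nu_k\}_{k\ge0}$ is called sparse if, with $E_k=\{\nu_k<\infty\}$, for every $k$ and every $A\subseteq E_k$ with $A\in\mathcal{F}_{\nu_k}$ we have $\mu(A\cap E_{k+1})\le\frac12\mu(A)$. An adapted sequence of sets $\{S_k\}_{k\ge0}$ ($S_k\in\mathcal{F}_k$) is $\eta$-sparse if for every $k\ge0$ and every $\mathcal{F}_k$-measurable $A\subseteq S_k$, $\mu(A\setminus\bigcup_{m\ge k+1}S_m)\ge\eta\mu(A)$; "sparse" means $\frac12$-sparse. *)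

theory Defs
  imports "HOL-Probability.Probability"
begin

definition nat_filtration :: "'a measure \<Rightarrow> (nat \<Rightarrow> 'a measure) \<Rightarrow> bool" where
  "nat_filtration M F \<longleftrightarrow>
     (\<forall>n. space (F n) = space M \<and> sets (F n) \<subseteq> sets M) \<and>
     (\<forall>m n. m \<le> n \<longrightarrow> sets (F m) \<subseteq> sets (F n))"

definition enat_stopping_time :: "'a measure \<Rightarrow> (nat \<Rightarrow> 'a measure) \<Rightarrow> ('a \<Rightarrow> enat) \<Rightarrow> bool" where
  "enat_stopping_time M F \<nu> \<longleftrightarrow> (\<forall>n. {x \<in> space M. \<nu> x \<le> enat n} \<in> sets (F n))"

definition stopped_sets :: "'a measure \<Rightarrow> (nat \<Rightarrow> 'a measure) \<Rightarrow> ('a \<Rightarrow> enat) \<Rightarrow> 'a set set" where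
  "stopped_sets M F \<nu> = {A \<in> sets M. \<forall>n. {x \<in> A. \<nu> x \<le> enat n} \<in> sets (F n)}"

text \<open>Sparse sequence of stopping times (the measure condition), with E_k = {\<nu>_k < \<infinity>}.\<close>
definition sparse_stopping_times :: "'a measure \<Rightarrow> (nat \<Rightarrow> 'a measure) \<Rightarrow> (nat \<Rightarrow> 'a \<Rightarrow> enat) \<Rightarrow> bool" where
  "sparse_stopping_times M F \<nu> \<longleftrightarrow>
     (\<forall>k A. A \<in> stopped_sets M F (\<nu> k) \<and> A \<subseteq> {x \<in> space M. \<nu> k x < \<infinity>} \<longrightarrow>
        measure M (A \<inter> {x \<in> space M. \<nu> (Suc k) x < \<infinity>}) \<le> 1/2 * measure M A)"

definition eta_sparse_sets :: "'a measure \<Rightarrow> (nat \<Rightarrow> 'a measure) \<Rightarrow> real \<Rightarrow> (nat \<Rightarrow> 'a set) \<Rightarrow> bool" where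
  "eta_sparse_sets M F \<eta> S \<longleftrightarrow>
     (\<forall>k. S k \<in> sets (F k)) \<and>
     (\<forall>k A. A \<in> sets (F k) \<and> A \<subseteq> S k \<longrightarrow>
        measure M (A - (\<Union>m\<in>{Suc k..}. S m)) \<ge> \<eta> * measure M A)"

end

theory Submission
  imports Defs
begin

lemma eq_in_F:
  assumes filt: "nat_filtration M F" and st: "enat_stopping_time M F \<nu>"
  shows "{x \<in> space M. \<nu> x = enat m} \<in> sets (F m)"
proof -
  have le: "\<And>n. {x \<in> space M. \<nu> x \<le> enat n} \<in> sets (F n)"
    using st unfolding enat_stopping_time_def by blast
  have sp: "space (F m) = space M" using filt unfolding nat_filtration_def by blast
  show ?thesis
  proof (cases m)
    case 0
    then show ?thesis using le[of 0] by (simp add: zero_enat_def[symmetric])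
  next
    case (Suc n)
    have sub: "sets (F n) \<subseteq> sets (F m)" using filt Suc unfolding nat_filtration_def by simp
    have "{x \<in> space M. \<nu> x = enat m} = {x \<in> space M. \<nu> x \<le> enat m} - {x \<in> space M. \<nu> x \<le> enat n}"
    proof (intro set_eqI iffI)
      fix x assume "x \<in> {x \<in> space M. \<nu> x = enat m}" then show "x \<in> {x \<in> space M. \<nu> x \<le> enat m} - {x \<in> space M. \<nu> x \<le> enat n}"
        using Suc by auto
    next
      fix x assume "x \<in> {x \<in> space M. \<nu> x \<le> enat m} - {x \<in> space M. \<nu> x \<le> enat n}"
      then show "x \<in> {x \<in> space M. \<nu> x = enat m}" using Suc by (cases "\<nu> x") auto
    qed
    also have "\<dots> \<in> sets (F m)" using le[of m] le[of n] sub by blast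
    finally show ?thesis .
  qed
qed

theorem lemma1p3:
  fixes M :: "'a measure" and F :: "nat \<Rightarrow> 'a measure" and \<nu> :: "nat \<Rightarrow> 'a \<Rightarrow> enat"
  assumes "prob_space M"
    and "nat_filtration M F"
    and "\<And>k. enat_stopping_time M F (\<nu> k)"
    and "\<And>k x. x \<in> space M \<Longrightarrow> \<nu> k x \<le> \<nu> (Suc k) x"
    and "sparse_stopping_times M F \<nu>"
  shows "eta_sparse_sets M F (1/2) (\<lambda>m. \<Union>k. {x \<in> space M. \<nu> k x = enat m})"
proof -
  interpret prob_space M by fact
  define S where "S = (\<lambda>m. \<Union>k. {x \<in> space M. \<nu> k x = enat m})"
  have subM: "\<And>n. sets (F n) \<subseteq> sets M" using assms(2) unfolding nat_filtration_def by blast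
  have mono: "\<And>a b. a \<le> b \<Longrightarrow> sets (F a) \<subseteq> sets (F b)" using assms(2) unfolding nat_filtration_def by blast
  have eqF: "\<And>k m. {x \<in> space M. \<nu> k x = enat m} \<in> sets (F m)"
    by (rule eq_in_F[OF assms(2) assms(3)])
  have SF: "\<And>m. S m \<in> sets (F m)"
    unfolding S_def using eqF by (intro sets.countable_UN) auto
  have SM: "\<And>m. S m \<in> sets M" using SF subM by blast
  have lei: "\<And>k n. {x \<in> space M. \<nu> k x \<le> enat n} \<in> sets (F n)"
    using assms(3) unfolding enat_stopping_time_def by blast
  define E where "E = (\<lambda>k. {x \<in> space M. \<nu> k x < \<infinity>})"
  have EM: "\<And>k. E k \<in> sets M"
  proof -
    fix k
    have "E k = (\<Union>n. {x \<in> space M. \<nu> k x \<le> enat n})"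
    proof (intro set_eqI iffI)
      fix x assume "x \<in> E k" then show "x \<in> (\<Union>n. {x \<in> space M. \<nu> k x \<le> enat n})"
        unfolding E_def by (cases "\<nu> k x") auto
    next
      fix x assume "x \<in> (\<Union>n. {x \<in> space M. \<nu> k x \<le> enat n})" then show "x \<in> E k"
        unfolding E_def by (cases "\<nu> k x") auto
    qed
    also have "\<dots> \<in> sets M" using lei subM by (intro sets.countable_UN) blast
    finally show "E k \<in> sets M" .
  qed
  have monoall: "\<And>i j x. x \<in> space M \<Longrightarrow> i \<le> j \<Longrightarrow> \<nu> i x \<le> \<nu> j x"
  proof -
    fix i j :: nat and x assume x: "x \<in> space M" and ij: "i \<le> j"
    show "\<nu> i x \<le> \<nu> j x" using ij
    proof (induction j)
      case 0 then show ?case by simp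
    next
      case (Suc j)
      then show ?case using assms(4)[OF x, of j] le_Suc_eq by (auto intro: order_trans)
    qed
  qed
  show ?thesis unfolding S_def[symmetric] eta_sparse_sets_def
  proof (intro conjI allI impI)
    fix m show "S m \<in> sets (F m)" by (rule SF)
  next
    fix m A assume "A \<in> sets (F m) \<and> A \<subseteq> S m"
    then have AF: "A \<in> sets (F m)" and AS: "A \<subseteq> S m" by auto
    have AM: "A \<in> sets M" using AF subM by blast
    define B where "B = (\<lambda>k. {x \<in> A. \<nu> k x = enat m \<and> (\<forall>j<k. \<nu> j x \<noteq> enat m)})"
    define D where "D = (\<lambda>k. B k - E (Suc k))"
    have AspM: "A \<subseteq> space M" using AM sets.sets_into_space by blast
    have BF: "\<And>k. B k \<in> sets (F m)"
    proof -
      fix k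
      have "B k = A \<inter> {x \<in> space M. \<nu> k x = enat m} - (\<Union>j<k. {x \<in> space M. \<nu> j x = enat m})"
        unfolding B_def using AspM by auto
      also have "\<dots> \<in> sets (F m)" using AF eqF by (intro sets.Diff sets.Int sets.finite_UN) auto
      finally show "B k \<in> sets (F m)" .
    qed
    have BM: "\<And>k. B k \<in> sets M" using BF subM by blast
    have DM: "\<And>k. D k \<in> sets M" unfolding D_def using BM EM by blast
    have Bstop: "\<And>k. B k \<in> stopped_sets M F (\<nu> k)"
    proof -
      fix k
      have "{x \<in> B k. \<nu> k x \<le> enat n} \<in> sets (F n)" for n
      proof (cases "m \<le> n")
        case True
        then have "{x \<in> B k. \<nu> k x \<le> enat n} = B k" unfolding B_def by auto
        then show ?thesis using BF mono[OF True] by auto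
      next
        case False
        then have "{x \<in> B k. \<nu> k x \<le> enat n} = {}" unfolding B_def by auto
        then show ?thesis by (metis sets.empty_sets)
      qed
      then show "B k \<in> stopped_sets M F (\<nu> k)" unfolding stopped_sets_def using BM by blast
    qed
    have BE: "\<And>k. B k \<subseteq> {x \<in> space M. \<nu> k x < \<infinity>}" unfolding B_def using AspM by auto
    have half: "\<And>k. measure M (B k \<inter> E (Suc k)) \<le> 1/2 * measure M (B k)"
      using assms(5) Bstop BE unfolding sparse_stopping_times_def E_def by blast
    have Dge: "\<And>k. 1/2 * measure M (B k) \<le> measure M (D k)"
      unfolding D_def using half finite_measure_Diff'[OF BM EM] by force
    have Bdisj: "disjoint_family B"
    unfolding disjoint_family_on_def proof (intro ballI impI)
      fix i j :: nat assume "i \<noteq> j"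
      then show "B i \<inter> B j = {}" unfolding B_def by (cases "i < j") auto
    qed
    have Ddisj: "disjoint_family D"
      using Bdisj unfolding disjoint_family_on_def D_def by blast
    have BU: "(\<Union>k. B k) = A"
    proof
      show "(\<Union>k. B k) \<subseteq> A" unfolding B_def by auto
    next
      show "A \<subseteq> (\<Union>k. B k)"
      proof
        fix x assume xA: "x \<in> A"
        then obtain k where k: "\<nu> k x = enat m" using AS unfolding S_def by auto
        define k0 where "k0 = (LEAST k. \<nu> k x = enat m)"
        have "\<nu> k0 x = enat m" unfolding k0_def by (rule LeastI[of _ k]) (rule k)
        moreover have "\<forall>j<k0. \<nu> j x \<noteq> enat m" unfolding k0_def using not_less_Least by blast
        ultimately show "x \<in> (\<Union>k. B k)" unfolding B_def using xA by blast
      qed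
    qed
    have sB: "(\<lambda>k. measure M (B k)) sums measure M A"
      using finite_measure_UNION[of B] BM Bdisj BU by auto
    have sD: "(\<lambda>k. measure M (D k)) sums measure M (\<Union>k. D k)"
      using finite_measure_UNION[of D] DM Ddisj by auto
    have "1/2 * measure M A \<le> measure M (\<Union>k. D k)"
      using sums_le[OF Dge sums_mult[OF sB, of "1/2"] sD] .
    also have "\<dots> \<le> measure M (A - (\<Union>j\<in>{Suc m..}. S j))"
    proof (rule finite_measure_mono)
      show "A - (\<Union>j\<in>{Suc m..}. S j) \<in> sets M" using AM SM by (intro sets.Diff sets.countable_UN') auto
      show "(\<Union>k. D k) \<subseteq> A - (\<Union>j\<in>{Suc m..}. S j)"
      proof
        fix x assume "x \<in> (\<Union>k. D k)"
        then obtain k where xB: "x \<in> B k" and xE: "x \<notin> E (Suc k)" unfolding D_def by auto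
        have xA: "x \<in> A" and xs: "x \<in> space M" and vk: "\<nu> k x = enat m" using xB AspM unfolding B_def by auto
        have inf: "\<nu> (Suc k) x = \<infinity>" using xE xs unfolding E_def by auto
        have "\<nu> i x \<notin> {enat j | j. j > m}" for i
        proof (cases "i \<le> k")
          case True then show ?thesis using monoall[OF xs True] vk by auto
        next
          case False
          then have "\<nu> (Suc k) x \<le> \<nu> i x" using monoall[OF xs] by simp
          then show ?thesis using inf by auto
        qed
        then show "x \<in> A - (\<Union>j\<in>{Suc m..}. S j)" using xA unfolding S_def by (auto simp: Suc_le_eq)
      qed
    qed
    finally show "1/2 * measure M A \<le> measure M (A - (\<Union>j\<in>{Suc m..}. S j))" .
  qed
qed

end
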